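(* Let $K\ge 2$, and let $\mathbb{P}^1_{\mathcal{X}},\dots,\mathbb{P}^K_{\mathcal{X}}$ be Borel probability measures on $\mathcal{X}=\mathbb{R}^\alpha$ with finite second moments. Let $\psi^m,\xi^m_\uparrow,\sigma,r^m,g^m$ ($m=1,\dots,M$) and the constants $C_{\sigma\circ g^m}$ be as follows: $\psi^m:\mathcal{X}\to\mathcal{Z}=\mathbb{R}^\gamma$ is $C_m$-Lipschitz, $\xi^m_\uparrow:\mathcal{Z}\to\mathcal{X}$ is $C_{m,\uparrow}$-Lipschitz, $\sigma:\mathcal{Z}\to\widetilde{\mathcal{Z}}\subseteq\mathcal{Z}$ is $C_\sigma$-Lipschitz, $r^m(x)=x-\xi^m_\uparrow(\psi^m(x))$, $g^m=\psi^m\circ (r^m)^{(L-1)}\circ (r^{m-1})^{(L)}\circ\cdots\circ (r^1)^{(L)}$ (with $g^1=\psi^1\circ(r^1)^{(L-1)}$), and $C_{\sigma\circ g^m}=C_\sigma C_m(1+C_mC_{m,\uparrow})^{L-1}\prod_{n=1}^{m-1}(1+C_nC_{n,\uparrow})^{L}$ (empty product equal to $1$). Set $C:=\sum_{m=1}^M\max\{(C_{\sigma\circ g^m})^2,1\}$. Then for every $\epsilon\ge 0$, $$\sum_{m=1}^M\max_{i\neq j}\widehat{\mathcal{W}}_{\epsilon,\widetilde{\mathcal{Z}}}\big((\sigma\circ g^m)_\#\mathbb{P}^i_{\mathcal{X}},(\sigma\circ g^m)_\#\mathbb{P}^j_{\mathcal{X}}\big)\le C\max_{i\neq j}\mathcal{W}_{\epsilon,\mathcal{X}}\big(\mathbb{P}^i_{\mathcal{X}},\mathbb{P}^j_{\mathcal{X}}\big),$$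 where the maxima range over $i,j\in\{1,\dots,K\}$ with $i\neq j$.
   Context: All spaces carry the Euclidean norm; $(r)^{(k)}$ is the $k$-fold composition ($(r)^{(0)}$ the identity); $f_\#\mu=\mu\circ f^{-1}$ denotes the pushforward measure. For a subset $S$ of a Euclidean space and Borel probability measures $\mu,\nu$ on $S$, let $\Pi(\mu,\nu;S)$ be the set of couplings of $\mu,\nu$, and for $\epsilon\ge0$ define the entropic regularized quadratic Wasserstein distance $$\mathcal{W}_{\epsilon,S}(\mu,\nu)=\inf_{\pi\in\Pi(\mu,\nu;S)}\int_{S\times S}\Big(\|x-y\|^2+\epsilon\log\frac{d\pi(x,y)}{d\mu(x)\,d\nu(y)}\Big)d\pi(x,y)$$ (the entropic term being $\epsilon\,\mathrm{KL}(\pi\,\|\,\mu\otimes\nu)$, taken as $+\infty$ if $\pi\not\ll\mu\otimes\nu$ and $\epsilon>0$). The Sinkhorn divergence is $\widehat{\mathcal{W}}_{\epsilon,S}(\mu,\nu)=\mathcal{W}_{\epsilon,S}(\mu,\nu)-\tfrac12\big(\mathcal{W}_{\epsilon,S}(\nu,\nu)+\mathcal{W}_{\epsilon,S}(\mu,\mu)\big)$. Here $S=\widetilde{\mathcal{Z}}$ or $S=\mathcal{X}$. *)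

theory Defs
  imports "HOL-Probability.Probability"
begin

text \<open>Borel probability measures on a Euclidean space are measures with
  sets M = sets borel and prob_space M.\<close>

definition couplings :: "'a::euclidean_space measure \<Rightarrow> 'a measure \<Rightarrow> ('a \<times> 'a) measure set" where
  "couplings \<mu> \<nu> = {\<pi>. prob_space \<pi> \<and> sets \<pi> = sets (borel \<Otimes>\<^sub>M borel) \<and>
        distr \<pi> borel fst = \<mu> \<and> distr \<pi> borel snd = \<nu>}"

definition KL_div :: "'b measure \<Rightarrow> 'b measure \<Rightarrow> ereal" where
  "KL_div \<pi> \<rho> =
     (if absolutely_continuous \<rho> \<pi> then
        (let f = (\<lambda>z. enn2real (RN_deriv \<rho> \<pi> z)) in
          enn2ereal (\<integral>\<^sup>+ z. ennreal (max 0 (ln (f z))) \<partial>\<pi>)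
          - enn2ereal (\<integral>\<^sup>+ z. ennreal (max 0 (- ln (f z))) \<partial>\<pi>))
      else \<infinity>)"

text \<open>Entropic regularised quadratic Wasserstein cost W_eps(mu,nu).  For eps = 0
  the entropy term vanishes (0 * infinity = 0 in ereal), giving W_2^2.\<close>

definition W_ent :: "real \<Rightarrow> 'a::euclidean_space measure \<Rightarrow> 'a measure \<Rightarrow> ereal" where
  "W_ent \<epsilon> \<mu> \<nu> =
     (INF \<pi> \<in> couplings \<mu> \<nu>.
        enn2ereal (\<integral>\<^sup>+ p. ennreal ((norm (fst p - snd p))\<^sup>2) \<partial>\<pi>)
        + ereal \<epsilon> * KL_div \<pi> (\<mu> \<Otimes>\<^sub>M \<nu>))"

definition sinkhorn :: "real \<Rightarrow> 'a::euclidean_space measure \<Rightarrow> 'a measure \<Rightarrow> ereal" where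
  "sinkhorn \<epsilon> \<mu> \<nu> = W_ent \<epsilon> \<mu> \<nu> - ereal (1/2) * (W_ent \<epsilon> \<nu> \<nu> + W_ent \<epsilon> \<mu> \<mu>)"

fun blocks :: "(nat \<Rightarrow> 'a \<Rightarrow> 'a) \<Rightarrow> nat \<Rightarrow> nat \<Rightarrow> 'a \<Rightarrow> 'a" where
  "blocks r L 0 = id"
| "blocks r L (Suc m) = (r (Suc m) ^^ L) \<circ> blocks r L m"

definition gmap :: "(nat \<Rightarrow> 'a \<Rightarrow> 'z) \<Rightarrow> (nat \<Rightarrow> 'a \<Rightarrow> 'a) \<Rightarrow> nat \<Rightarrow> nat \<Rightarrow> 'a \<Rightarrow> 'z" where
  "gmap \<psi> r L m = \<psi> m \<circ> (r m ^^ (L - 1)) \<circ> blocks r L (m - 1)"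

end

theory Submission imports Defs begin

lemma ereal_cancel_aux:
  fixes x y :: ereal and na nb :: real
  assumes "x + ereal na \<le> y + ereal nb"
  shows "x - ereal nb \<le> y - ereal na"
  using assms by (cases x; cases y) auto

lemma core:
  fixes \<pi> :: "'b measure" and a b :: "'b \<Rightarrow> real"
  assumes P: "prob_space \<pi>" and [measurable]: "a \<in> borel_measurable \<pi>" "b \<in> borel_measurable \<pi>"
    and apos: "AE x in \<pi>. a x > 0" and bpos: "AE x in \<pi>. b x > 0"
    and iba: "(\<integral>\<^sup>+x. ennreal (b x / a x) \<partial>\<pi>) \<le> 1"
    and ia: "(\<integral>\<^sup>+x. ennreal (1 / a x) \<partial>\<pi>) \<le> 1"
    and ib: "(\<integral>\<^sup>+x. ennreal (1 / b x) \<partial>\<pi>) \<le> 1"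
  shows "enn2ereal (\<integral>\<^sup>+ z. ennreal (max 0 (ln (b z))) \<partial>\<pi>) - enn2ereal (\<integral>\<^sup>+ z. ennreal (max 0 (- ln (b z))) \<partial>\<pi>)
       \<le> enn2ereal (\<integral>\<^sup>+ z. ennreal (max 0 (ln (a z))) \<partial>\<pi>) - enn2ereal (\<integral>\<^sup>+ z. ennreal (max 0 (- ln (a z))) \<partial>\<pi>)"
proof -
  interpret prob_space \<pi> by fact
  define Pa where "Pa = (\<integral>\<^sup>+ z. ennreal (max 0 (ln (a z))) \<partial>\<pi>)"
  define Na where "Na = (\<integral>\<^sup>+ z. ennreal (max 0 (- ln (a z))) \<partial>\<pi>)"
  define Pb where "Pb = (\<integral>\<^sup>+ z. ennreal (max 0 (ln (b z))) \<partial>\<pi>)"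
  define Nb where "Nb = (\<integral>\<^sup>+ z. ennreal (max 0 (- ln (b z))) \<partial>\<pi>)"
  have negl: "max 0 (- ln t) \<le> 1 / t" if "t > 0" for t :: real
  proof -
    have "ln (1/t) \<le> 1/t - 1" using that by (intro ln_le_minus_one) auto
    then show ?thesis using that by (simp add: ln_div)
  qed
  have Na: "Na \<le> 1"
  proof -
    have "Na \<le> (\<integral>\<^sup>+x. ennreal (1 / a x) \<partial>\<pi>)"
      unfolding Na_def proof (rule nn_integral_mono_AE)
      show "AE x in \<pi>. ennreal (max 0 (- ln (a x))) \<le> ennreal (1 / a x)"
        using apos by eventually_elim (rule ennreal_leI, rule negl)
    qed
    then show ?thesis using ia by simp
  qed
  have Nb: "Nb \<le> 1"
  proof -
    have "Nb \<le> (\<integral>\<^sup>+x. ennreal (1 / b x) \<partial>\<pi>)"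
      unfolding Nb_def proof (rule nn_integral_mono_AE)
      show "AE x in \<pi>. ennreal (max 0 (- ln (b x))) \<le> ennreal (1 / b x)"
        using bpos by eventually_elim (rule ennreal_leI, rule negl)
    qed
    then show ?thesis using ib by simp
  qed
  have pw: "ennreal (max 0 (ln (b x))) + ennreal (max 0 (- ln (a x))) + 1
      \<le> ennreal (max 0 (ln (a x))) + ennreal (max 0 (- ln (b x))) + ennreal (b x / a x)"
    if "a x > 0" "b x > 0" for x
  proof -
    have "ln (b x / a x) \<le> b x / a x - 1" using that by (intro ln_le_minus_one) auto
    then have "max 0 (ln (b x)) + max 0 (- ln (a x)) + 1 \<le> max 0 (ln (a x)) + max 0 (- ln (b x)) + b x / a x"
      using that by (simp add: ln_div)
    then have "ennreal (max 0 (ln (b x)) + max 0 (- ln (a x)) + 1) \<le> ennreal (max 0 (ln (a x)) + max 0 (- ln (b x)) + b x / a x)"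
      by (rule ennreal_leI)
    moreover have "ennreal (max 0 (ln (b x)) + max 0 (- ln (a x)) + 1) = ennreal (max 0 (ln (b x))) + ennreal (max 0 (- ln (a x))) + 1"
      by (subst ennreal_plus, simp, simp, subst ennreal_plus, auto)
    moreover have "ennreal (max 0 (ln (a x)) + max 0 (- ln (b x)) + b x / a x) = ennreal (max 0 (ln (a x))) + ennreal (max 0 (- ln (b x))) + ennreal (b x / a x)"
      using that by (subst ennreal_plus, simp, simp, subst ennreal_plus, auto)
    ultimately show ?thesis by simp
  qed
  have "Pb + Na + 1 = (\<integral>\<^sup>+x. ennreal (max 0 (ln (b x))) + ennreal (max 0 (- ln (a x))) + 1 \<partial>\<pi>)"
    unfolding Pb_def Na_def by (simp add: nn_integral_add emeasure_space_1)
  also have "\<dots> \<le> (\<integral>\<^sup>+x. ennreal (max 0 (ln (a x))) + ennreal (max 0 (- ln (b x))) + ennreal (b x / a x) \<partial>\<pi>)"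
    proof (rule nn_integral_mono_AE)
      show "AE x in \<pi>. ennreal (max 0 (ln (b x))) + ennreal (max 0 (- ln (a x))) + 1 \<le> ennreal (max 0 (ln (a x))) + ennreal (max 0 (- ln (b x))) + ennreal (b x / a x)"
        using apos bpos by eventually_elim (rule pw)
    qed
  also have "\<dots> = Pa + Nb + (\<integral>\<^sup>+x. ennreal (b x / a x) \<partial>\<pi>)"
    unfolding Pa_def Nb_def by (simp add: nn_integral_add)
  also have "\<dots> \<le> Pa + Nb + 1" using iba by (intro add_left_mono)
  finally have "Pb + Na + 1 \<le> Pa + Nb + 1" .
  then have "1 + (Pb + Na) \<le> 1 + (Pa + Nb)" by (simp only: ac_simps)
  then have le: "Pb + Na \<le> Pa + Nb"
    unfolding ennreal_add_left_cancel_le by simp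
  have Na_fin: "Na < top" using Na ennreal_one_less_top le_less_trans by blast
  have Nb_fin: "Nb < top" using Nb ennreal_one_less_top le_less_trans by blast
  define na where "na = enn2real Na"
  define nb where "nb = enn2real Nb"
  have na: "Na = ennreal na" "na \<ge> 0" using Na_fin by (auto simp: na_def)
  have nb: "Nb = ennreal nb" "nb \<ge> 0" using Nb_fin by (auto simp: nb_def)
  have "enn2ereal (Pb + Na) \<le> enn2ereal (Pa + Nb)" using le by (simp add: less_eq_ennreal.rep_eq)
  then have "enn2ereal Pb + ereal na \<le> enn2ereal Pa + ereal nb"
    using na nb by (simp add: plus_ennreal.rep_eq enn2ereal_ennreal)
  then have "enn2ereal Pb - ereal nb \<le> enn2ereal Pa - ereal na" by (rule ereal_cancel_aux)
  then show ?thesis using na nb unfolding Pa_def Pb_def Na_def Nb_def[symmetric]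
    by (simp add: Nb_def[symmetric])
qed


lemma RN_facts:
  fixes \<pi> \<rho> :: "'b measure"
  assumes P: "prob_space \<pi>" and R: "prob_space \<rho>" and S: "sets \<pi> = sets \<rho>"
    and ac: "absolutely_continuous \<rho> \<pi>"
  defines "a \<equiv> (\<lambda>z. enn2real (RN_deriv \<rho> \<pi> z))"
  shows RN_int: "\<And>g. g \<in> borel_measurable \<rho> \<Longrightarrow> (\<And>x. g x \<ge> 0) \<Longrightarrow>
            (\<integral>\<^sup>+x. ennreal (g x) \<partial>\<pi>) = (\<integral>\<^sup>+x. ennreal (a x * g x) \<partial>\<rho>)"
    and RN_pos: "AE x in \<pi>. a x > 0"
    and RN_inv: "(\<integral>\<^sup>+x. ennreal (1 / a x) \<partial>\<pi>) \<le> 1"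
    and RN_meas: "a \<in> borel_measurable \<rho>"
proof -
  interpret R: prob_space \<rho> by fact
  interpret P: prob_space \<pi> by fact
  show am: "a \<in> borel_measurable \<rho>" unfolding a_def by measurable
  have fin: "AE x in \<rho>. RN_deriv \<rho> \<pi> x \<noteq> \<infinity>"
    by (rule R.RN_deriv_finite) (use ac S in \<open>auto intro: P.sigma_finite_measure\<close>)
  show int: "(\<integral>\<^sup>+x. ennreal (g x) \<partial>\<pi>) = (\<integral>\<^sup>+x. ennreal (a x * g x) \<partial>\<rho>)"
    if g: "g \<in> borel_measurable \<rho>" and gp: "\<And>x. g x \<ge> 0" for g
  proof -
    have "(\<integral>\<^sup>+x. ennreal (g x) \<partial>\<pi>) = (\<integral>\<^sup>+x. RN_deriv \<rho> \<pi> x * ennreal (g x) \<partial>\<rho>)"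
      by (rule R.RN_deriv_nn_integral) (use ac S g in auto)
    also have "\<dots> = (\<integral>\<^sup>+x. ennreal (a x * g x) \<partial>\<rho>)"
    proof (rule nn_integral_cong_AE)
      show "AE x in \<rho>. RN_deriv \<rho> \<pi> x * ennreal (g x) = ennreal (a x * g x)"
        using fin
      proof eventually_elim
        case (elim x)
        then have "RN_deriv \<rho> \<pi> x = ennreal (a x)" unfolding a_def
          by (simp add: less_top)
        then show ?case using gp[of x] by (simp add: ennreal_mult' a_def)
      qed
    qed
    finally show ?thesis .
  qed
  define g where "g x = (if a x \<le> 0 then 1 else 0::real)" for x
  have gm: "g \<in> borel_measurable \<rho>" unfolding g_def using am by measurable
  have "(\<integral>\<^sup>+x. ennreal (g x) \<partial>\<pi>) = (\<integral>\<^sup>+x. ennreal (a x * g x) \<partial>\<rho>)"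
    by (rule int[OF gm]) (simp add: g_def)
  also have "\<dots> = 0"
  proof -
    have h: "a x * g x = 0" for x unfolding g_def a_def by (simp add: order.antisym)
    have "(\<lambda>x. ennreal (a x * g x)) = (\<lambda>x. 0)" by (intro ext) (simp only: h ennreal_0)
    then show ?thesis by simp
  qed
  finally have "(\<integral>\<^sup>+x. ennreal (g x) \<partial>\<pi>) = 0" .
  moreover have "(\<lambda>x. ennreal (g x)) \<in> borel_measurable \<pi>"
    using gm unfolding measurable_cong_sets[OF S refl] by measurable
  ultimately have "AE x in \<pi>. ennreal (g x) = 0" by (simp add: nn_integral_0_iff_AE)
  then show "AE x in \<pi>. a x > 0"
    by eventually_elim (auto simp: g_def split: if_splits)
  have "(\<integral>\<^sup>+x. ennreal (1 / a x) \<partial>\<pi>) = (\<integral>\<^sup>+x. ennreal (a x * (1 / a x)) \<partial>\<rho>)"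
    by (rule int) (use am in \<open>auto simp: a_def\<close>)
  also have "\<dots> \<le> (\<integral>\<^sup>+x. 1 \<partial>\<rho>)"
    by (intro nn_integral_mono) (auto simp: ennreal_le_1)
  also have "\<dots> = 1" by (simp add: R.emeasure_space_1)
  finally show "(\<integral>\<^sup>+x. ennreal (1 / a x) \<partial>\<pi>) \<le> 1" .
qed


lemma KL_nonneg:
  assumes P: "prob_space \<pi>" and R: "prob_space \<rho>" and S: "sets \<pi> = sets \<rho>"
  shows "KL_div \<pi> \<rho> \<ge> 0"
proof (cases "absolutely_continuous \<rho> \<pi>")
  case False then show ?thesis by (simp add: KL_div_def)
next
  case ac: True
  define a where "a = (\<lambda>z. enn2real (RN_deriv \<rho> \<pi> z))"
  note F = RN_facts[OF P R S ac]
  have am: "a \<in> borel_measurable \<pi>" using F(4)[folded a_def] unfolding measurable_cong_sets[OF S refl] .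
  have "enn2ereal (\<integral>\<^sup>+ z. ennreal (max 0 (ln ((\<lambda>_. 1::real) z))) \<partial>\<pi>) - enn2ereal (\<integral>\<^sup>+ z. ennreal (max 0 (- ln ((\<lambda>_. 1::real) z))) \<partial>\<pi>)
       \<le> enn2ereal (\<integral>\<^sup>+ z. ennreal (max 0 (ln (a z))) \<partial>\<pi>) - enn2ereal (\<integral>\<^sup>+ z. ennreal (max 0 (- ln (a z))) \<partial>\<pi>)"
  proof (rule core[OF P am])
    show "(\<lambda>_. 1::real) \<in> borel_measurable \<pi>" by simp
    show "AE x in \<pi>. 0 < a x" using F(2) by (simp add: a_def)
    show "AE x in \<pi>. 0 < (1::real)" by simp
    show "(\<integral>\<^sup>+x. ennreal (1 / a x) \<partial>\<pi>) \<le> 1" using F(3) by (simp add: a_def)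
    then show "(\<integral>\<^sup>+x. ennreal (1 / a x) \<partial>\<pi>) \<le> 1" .
    show "(\<integral>\<^sup>+x. ennreal (1 / 1) \<partial>\<pi>) \<le> 1"
      using P by (simp add: prob_space.emeasure_space_1)
  qed
  then show ?thesis using ac by (simp add: KL_div_def Let_def a_def)
qed

lemma KL_distr:
  assumes P: "prob_space \<pi>" and R: "prob_space \<rho>" and S: "sets \<pi> = sets \<rho>"
    and T: "T \<in> measurable \<rho> B"
  shows "KL_div (distr \<pi> B T) (distr \<rho> B T) \<le> KL_div \<pi> \<rho>"
proof (cases "absolutely_continuous \<rho> \<pi>")
  case False then show ?thesis by (simp add: KL_div_def)
next
  case ac: True
  interpret P: prob_space \<pi> by fact
  interpret R: prob_space \<rho> by fact
  have sp: "space \<pi> = space \<rho>" using S by (rule sets_eq_imp_space_eq)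
  have Tp: "T \<in> measurable \<pi> B" using T unfolding measurable_cong_sets[OF S refl] .
  define \<pi>' where "\<pi>' = distr \<pi> B T"
  define \<rho>' where "\<rho>' = distr \<rho> B T"
  have P': "prob_space \<pi>'" unfolding \<pi>'_def by (rule P.prob_space_distr[OF Tp])
  have R': "prob_space \<rho>'" unfolding \<rho>'_def by (rule R.prob_space_distr[OF T])
  have S': "sets \<pi>' = sets \<rho>'" unfolding \<pi>'_def \<rho>'_def by simp
  have ac': "absolutely_continuous \<rho>' \<pi>'"
    unfolding absolutely_continuous_def
  proof
    fix A assume A: "A \<in> null_sets \<rho>'"
    then have As: "A \<in> sets B" and "emeasure \<rho> (T -` A \<inter> space \<rho>) = 0"
      unfolding \<rho>'_def by (auto simp: null_sets_def emeasure_distr[OF T])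
    then have "T -` A \<inter> space \<rho> \<in> null_sets \<rho>" using T As by (auto simp: null_sets_def)
    then have "T -` A \<inter> space \<rho> \<in> null_sets \<pi>" using ac by (auto simp: absolutely_continuous_def)
    then show "A \<in> null_sets \<pi>'"
      unfolding \<pi>'_def using As sp by (auto simp: null_sets_def emeasure_distr[OF Tp])
  qed
  define a where "a = (\<lambda>z. enn2real (RN_deriv \<rho> \<pi> z))"
  define h where "h = (\<lambda>z. enn2real (RN_deriv \<rho>' \<pi>' z))"
  define b where "b = (\<lambda>z. h (T z))"
  note F = RN_facts[OF P R S ac]
  note F' = RN_facts[OF P' R' S' ac']
  have am: "a \<in> borel_measurable \<pi>" using F(4)[folded a_def] unfolding measurable_cong_sets[OF S refl] .
  have hm: "h \<in> borel_measurable B" using F'(4)[folded h_def] unfolding \<rho>'_def by simp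
  have bm: "b \<in> borel_measurable \<pi>" unfolding b_def using hm Tp by measurable
  have bmr: "b \<in> borel_measurable \<rho>" unfolding b_def using hm T by measurable
  have hnn: "h y \<ge> 0" for y by (simp add: h_def)
  have main: "enn2ereal (\<integral>\<^sup>+ z. ennreal (max 0 (ln (b z))) \<partial>\<pi>) - enn2ereal (\<integral>\<^sup>+ z. ennreal (max 0 (- ln (b z))) \<partial>\<pi>)
       \<le> enn2ereal (\<integral>\<^sup>+ z. ennreal (max 0 (ln (a z))) \<partial>\<pi>) - enn2ereal (\<integral>\<^sup>+ z. ennreal (max 0 (- ln (a z))) \<partial>\<pi>)"
  proof (rule core[OF P am bm])
    show "AE x in \<pi>. 0 < a x" using F(2) by (simp add: a_def)
    show "(\<integral>\<^sup>+x. ennreal (1 / a x) \<partial>\<pi>) \<le> 1" using F(3) by (simp add: a_def)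
    have "AE y in \<pi>'. 0 < h y" using F'(2) by (simp add: h_def)
    then show "AE x in \<pi>. 0 < b x" unfolding \<pi>'_def b_def
      using hm Tp by (subst (asm) AE_distr_iff) auto
    have "(\<integral>\<^sup>+x. ennreal (1 / b x) \<partial>\<pi>) = (\<integral>\<^sup>+y. ennreal (1 / h y) \<partial>\<pi>')"
      unfolding \<pi>'_def b_def using hm Tp by (subst nn_integral_distr) auto
    also have "\<dots> \<le> 1" using F'(3) by (simp add: h_def)
    finally show "(\<integral>\<^sup>+x. ennreal (1 / b x) \<partial>\<pi>) \<le> 1" .
    have "(\<integral>\<^sup>+x. ennreal (b x / a x) \<partial>\<pi>) = (\<integral>\<^sup>+x. ennreal (a x * (b x / a x)) \<partial>\<rho>)"
      unfolding a_def by (rule F(1)) (use bmr in \<open>auto simp: b_def hnn\<close>)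
    also have "\<dots> \<le> (\<integral>\<^sup>+x. ennreal (b x) \<partial>\<rho>)"
      by (intro nn_integral_mono ennreal_leI) (auto simp: a_def b_def hnn)
    also have "\<dots> = (\<integral>\<^sup>+y. ennreal (h y) \<partial>\<rho>')"
      unfolding \<rho>'_def b_def using hm T by (subst nn_integral_distr) auto
    also have "\<dots> = (\<integral>\<^sup>+y. ennreal (h y * 1) \<partial>\<rho>')" by simp
    also have "\<dots> = (\<integral>\<^sup>+y. ennreal 1 \<partial>\<pi>')"
      unfolding h_def by (rule F'(1)[symmetric]) auto
    also have "\<dots> = 1" using P' by (simp add: prob_space.emeasure_space_1)
    finally show "(\<integral>\<^sup>+x. ennreal (b x / a x) \<partial>\<pi>) \<le> 1" by simp
  qed
  have eq1: "(\<integral>\<^sup>+ z. ennreal (max 0 (ln (h z))) \<partial>\<pi>') = (\<integral>\<^sup>+ z. ennreal (max 0 (ln (b z))) \<partial>\<pi>)"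
    unfolding \<pi>'_def b_def using hm Tp by (subst nn_integral_distr) auto
  have eq2: "(\<integral>\<^sup>+ z. ennreal (max 0 (- ln (h z))) \<partial>\<pi>') = (\<integral>\<^sup>+ z. ennreal (max 0 (- ln (b z))) \<partial>\<pi>)"
    unfolding \<pi>'_def b_def using hm Tp by (subst nn_integral_distr) auto
  have "KL_div \<pi>' \<rho>' \<le> KL_div \<pi> \<rho>"
    using main ac ac' unfolding KL_div_def Let_def a_def[symmetric] h_def[symmetric] eq1 eq2
    by simp
  then show ?thesis unfolding \<pi>'_def \<rho>'_def .
qed


lemma coupling_props:
  assumes "\<pi> \<in> couplings \<mu> \<nu>"
  shows "prob_space \<pi>" "sets \<pi> = sets (borel \<Otimes>\<^sub>M borel)" "prob_space \<mu>" "prob_space \<nu>"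
    "sets \<mu> = sets borel" "sets \<nu> = sets borel" "sets \<pi> = sets (\<mu> \<Otimes>\<^sub>M \<nu>)"
    "prob_space (\<mu> \<Otimes>\<^sub>M \<nu>)"
proof -
  have P: "prob_space \<pi>" and S: "sets \<pi> = sets (borel \<Otimes>\<^sub>M borel)"
    and m: "distr \<pi> borel fst = \<mu>" and n: "distr \<pi> borel snd = \<nu>"
    using assms by (auto simp: couplings_def)
  show "prob_space \<pi>" "sets \<pi> = sets (borel \<Otimes>\<^sub>M borel)" by fact+
  have f: "fst \<in> measurable \<pi> borel" unfolding measurable_cong_sets[OF S refl] by measurable
  have s: "snd \<in> measurable \<pi> borel" unfolding measurable_cong_sets[OF S refl] by measurable
  show pm: "prob_space \<mu>" using prob_space.prob_space_distr[OF P f] m by simp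
  show pn: "prob_space \<nu>" using prob_space.prob_space_distr[OF P s] n by simp
  show sm: "sets \<mu> = sets borel" using m[symmetric] by simp
  show sn: "sets \<nu> = sets borel" using n[symmetric] by simp
  show "sets \<pi> = sets (\<mu> \<Otimes>\<^sub>M \<nu>)" using S sm sn by (simp cong: sets_pair_measure_cong)
  show "prob_space (\<mu> \<Otimes>\<^sub>M \<nu>)"
  proof -
    interpret pair_prob_space \<mu> \<nu> using pm pn by (simp add: pair_prob_space_def pair_sigma_finite_def prob_space_imp_sigma_finite)
    show ?thesis by (rule P.prob_space_axioms)
  qed
qed

lemma val_nonneg:
  assumes "\<pi> \<in> couplings \<mu> \<nu>" "\<epsilon> \<ge> 0"
  shows "0 \<le> enn2ereal (\<integral>\<^sup>+ p. ennreal ((norm (fst p - snd p))\<^sup>2) \<partial>\<pi>) + ereal \<epsilon> * KL_div \<pi> (\<mu> \<Otimes>\<^sub>M \<nu>)"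
proof -
  note c = coupling_props[OF assms(1)]
  have "KL_div \<pi> (\<mu> \<Otimes>\<^sub>M \<nu>) \<ge> 0" by (rule KL_nonneg[OF c(1) c(8) c(7)])
  then have "ereal \<epsilon> * KL_div \<pi> (\<mu> \<Otimes>\<^sub>M \<nu>) \<ge> 0" using assms(2) by simp
  then show ?thesis by simp
qed

lemma W_nonneg:
  assumes "\<epsilon> \<ge> 0"
  shows "W_ent \<epsilon> \<mu> \<nu> \<ge> 0"
  unfolding W_ent_def by (rule INF_greatest) (rule val_nonneg[OF _ assms])

lemma val_push:
  fixes F :: "'a::euclidean_space \<Rightarrow> 'b::euclidean_space"
  assumes Fl: "lipschitz_on c UNIV F" and eps: "\<epsilon> \<ge> 0" and cp: "\<pi> \<in> couplings \<mu> \<nu>"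
  defines "T \<equiv> (\<lambda>(x, y). (F x, F y))"
  shows "distr \<pi> (borel \<Otimes>\<^sub>M borel) T \<in> couplings (distr \<mu> borel F) (distr \<nu> borel F)"
    and "enn2ereal (\<integral>\<^sup>+ p. ennreal ((norm (fst p - snd p))\<^sup>2) \<partial>distr \<pi> (borel \<Otimes>\<^sub>M borel) T)
           + ereal \<epsilon> * KL_div (distr \<pi> (borel \<Otimes>\<^sub>M borel) T) (distr \<mu> borel F \<Otimes>\<^sub>M distr \<nu> borel F)
         \<le> ereal (max (c\<^sup>2) 1) * (enn2ereal (\<integral>\<^sup>+ p. ennreal ((norm (fst p - snd p))\<^sup>2) \<partial>\<pi>) + ereal \<epsilon> * KL_div \<pi> (\<mu> \<Otimes>\<^sub>M \<nu>))"
proof -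
  note c = coupling_props[OF cp]
  have m: "distr \<pi> borel fst = \<mu>" and n: "distr \<pi> borel snd = \<nu>"
    using cp by (auto simp: couplings_def)
  have Fm[measurable]: "F \<in> borel_measurable borel"
    by (rule borel_measurable_continuous_onI) (rule lipschitz_on_continuous_on[OF Fl])
  have Tm: "T \<in> measurable (borel \<Otimes>\<^sub>M borel) (borel \<Otimes>\<^sub>M borel)" unfolding T_def by measurable
  have Tp: "T \<in> measurable \<pi> (borel \<Otimes>\<^sub>M borel)" using Tm unfolding measurable_cong_sets[OF c(2) refl] .
  have Tr: "T \<in> measurable (\<mu> \<Otimes>\<^sub>M \<nu>) (borel \<Otimes>\<^sub>M borel)"
    using Tm c(5,6) by (simp cong: measurable_cong_sets sets_pair_measure_cong)
  have fm: "fst \<in> measurable \<pi> borel" unfolding measurable_cong_sets[OF c(2) refl] by measurable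
  have sm: "snd \<in> measurable \<pi> borel" unfolding measurable_cong_sets[OF c(2) refl] by measurable
  define \<pi>' where "\<pi>' = distr \<pi> (borel \<Otimes>\<^sub>M borel) T"
  show "distr \<pi> (borel \<Otimes>\<^sub>M borel) T \<in> couplings (distr \<mu> borel F) (distr \<nu> borel F)"
    unfolding couplings_def
  proof (intro CollectI conjI)
    show "prob_space (distr \<pi> (borel \<Otimes>\<^sub>M borel) T)" by (rule prob_space.prob_space_distr[OF c(1) Tp])
    show "sets (distr \<pi> (borel \<Otimes>\<^sub>M borel) T) = sets (borel \<Otimes>\<^sub>M borel)" by simp
    have "distr (distr \<pi> (borel \<Otimes>\<^sub>M borel) T) borel fst = distr \<pi> borel (fst \<circ> T)"
      by (rule distr_distr) (use Tp in auto)
    also have "fst \<circ> T = F \<circ> fst" unfolding T_def by auto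
    also have "distr \<pi> borel (F \<circ> fst) = distr (distr \<pi> borel fst) borel F"
      by (rule distr_distr[symmetric]) (use fm in auto)
    finally show "distr (distr \<pi> (borel \<Otimes>\<^sub>M borel) T) borel fst = distr \<mu> borel F" using m by simp
    have "distr (distr \<pi> (borel \<Otimes>\<^sub>M borel) T) borel snd = distr \<pi> borel (snd \<circ> T)"
      by (rule distr_distr) (use Tp in auto)
    also have "snd \<circ> T = F \<circ> snd" unfolding T_def by auto
    also have "distr \<pi> borel (F \<circ> snd) = distr (distr \<pi> borel snd) borel F"
      by (rule distr_distr[symmetric]) (use sm in auto)
    finally show "distr (distr \<pi> (borel \<Otimes>\<^sub>M borel) T) borel snd = distr \<nu> borel F" using n by simp
  qed
  have prodeq: "distr \<mu> borel F \<Otimes>\<^sub>M distr \<nu> borel F = distr (\<mu> \<Otimes>\<^sub>M \<nu>) (borel \<Otimes>\<^sub>M borel) T"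
    unfolding T_def
  proof (rule pair_measure_distr)
    show "F \<in> measurable \<mu> borel" using c(5) by (simp cong: measurable_cong_sets)
    show "F \<in> measurable \<nu> borel" using c(6) by (simp cong: measurable_cong_sets)
    then show "sigma_finite_measure (distr \<nu> borel F)"
      by (intro prob_space_imp_sigma_finite prob_space.prob_space_distr[OF c(4)])
  qed
  have KL: "KL_div (distr \<pi> (borel \<Otimes>\<^sub>M borel) T) (distr \<mu> borel F \<Otimes>\<^sub>M distr \<nu> borel F) \<le> KL_div \<pi> (\<mu> \<Otimes>\<^sub>M \<nu>)"
    unfolding prodeq using KL_distr[OF c(1) c(8) c(7) Tr] .
  have KL0: "KL_div \<pi> (\<mu> \<Otimes>\<^sub>M \<nu>) \<ge> 0" by (rule KL_nonneg[OF c(1) c(8) c(7)])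
  have c0: "c \<ge> 0" using Fl by (rule lipschitz_on_nonneg)
  have "(\<integral>\<^sup>+ p. ennreal ((norm (fst p - snd p))\<^sup>2) \<partial>distr \<pi> (borel \<Otimes>\<^sub>M borel) T)
      = (\<integral>\<^sup>+ p. ennreal ((norm (fst (T p) - snd (T p)))\<^sup>2) \<partial>\<pi>)"
    by (rule nn_integral_distr[OF Tp]) measurable
  also have "\<dots> \<le> (\<integral>\<^sup>+ p. ennreal (c\<^sup>2) * ennreal ((norm (fst p - snd p))\<^sup>2) \<partial>\<pi>)"
  proof (rule nn_integral_mono)
    fix p :: "'a \<times> 'a"
    obtain x y where p: "p = (x, y)" by fastforce
    have "norm (F x - F y) \<le> c * norm (x - y)" using Fl by (rule lipschitz_on_normD) auto
    then have "(norm (F x - F y))\<^sup>2 \<le> (c * norm (x - y))\<^sup>2" by (intro power_mono) auto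
    then show "ennreal ((norm (fst (T p) - snd (T p)))\<^sup>2) \<le> ennreal (c\<^sup>2) * ennreal ((norm (fst p - snd p))\<^sup>2)"
      unfolding p T_def by (simp add: ennreal_mult'[symmetric] power_mult_distrib ennreal_leI)
  qed
  also have "\<dots> = ennreal (c\<^sup>2) * (\<integral>\<^sup>+ p. ennreal ((norm (fst p - snd p))\<^sup>2) \<partial>\<pi>)"
    by (rule nn_integral_cmult) (use c(2) in \<open>simp cong: measurable_cong_sets\<close>)
  finally have cost: "enn2ereal (\<integral>\<^sup>+ p. ennreal ((norm (fst p - snd p))\<^sup>2) \<partial>distr \<pi> (borel \<Otimes>\<^sub>M borel) T)
      \<le> ereal (c\<^sup>2) * enn2ereal (\<integral>\<^sup>+ p. ennreal ((norm (fst p - snd p))\<^sup>2) \<partial>\<pi>)"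
    by (simp add: less_eq_ennreal.rep_eq times_ennreal.rep_eq enn2ereal_ennreal)
  define A where "A = enn2ereal (\<integral>\<^sup>+ p. ennreal ((norm (fst p - snd p))\<^sup>2) \<partial>\<pi>)"
  define B where "B = ereal \<epsilon> * KL_div \<pi> (\<mu> \<Otimes>\<^sub>M \<nu>)"
  have A0: "A \<ge> 0" unfolding A_def by simp
  have B0: "B \<ge> 0" unfolding B_def using KL0 eps by simp
  have "ereal (c\<^sup>2) * A \<le> ereal (max (c\<^sup>2) 1) * A" using A0 by (intro ereal_mult_right_mono) auto
  moreover have "ereal \<epsilon> * KL_div (distr \<pi> (borel \<Otimes>\<^sub>M borel) T) (distr \<mu> borel F \<Otimes>\<^sub>M distr \<nu> borel F) \<le> B"
    unfolding B_def using KL eps by (intro ereal_mult_left_mono) auto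
  moreover have "B \<le> ereal (max (c\<^sup>2) 1) * B"
  proof -
    have "ereal 1 * B \<le> ereal (max (c\<^sup>2) 1) * B" using B0 by (intro ereal_mult_right_mono) auto
    then show ?thesis by simp
  qed
  ultimately have "enn2ereal (\<integral>\<^sup>+ p. ennreal ((norm (fst p - snd p))\<^sup>2) \<partial>distr \<pi> (borel \<Otimes>\<^sub>M borel) T)
           + ereal \<epsilon> * KL_div (distr \<pi> (borel \<Otimes>\<^sub>M borel) T) (distr \<mu> borel F \<Otimes>\<^sub>M distr \<nu> borel F)
      \<le> ereal (max (c\<^sup>2) 1) * A + ereal (max (c\<^sup>2) 1) * B"
    using cost unfolding A_def[symmetric] by (intro add_mono) auto
  also have "\<dots> = ereal (max (c\<^sup>2) 1) * (A + B)" using A0 B0 by (simp add: ereal_right_distrib)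
  finally show "enn2ereal (\<integral>\<^sup>+ p. ennreal ((norm (fst p - snd p))\<^sup>2) \<partial>distr \<pi> (borel \<Otimes>\<^sub>M borel) T)
           + ereal \<epsilon> * KL_div (distr \<pi> (borel \<Otimes>\<^sub>M borel) T) (distr \<mu> borel F \<Otimes>\<^sub>M distr \<nu> borel F)
         \<le> ereal (max (c\<^sup>2) 1) * (enn2ereal (\<integral>\<^sup>+ p. ennreal ((norm (fst p - snd p))\<^sup>2) \<partial>\<pi>) + ereal \<epsilon> * KL_div \<pi> (\<mu> \<Otimes>\<^sub>M \<nu>))"
    unfolding A_def B_def .
qed

lemma W_push:
  fixes F :: "'a::euclidean_space \<Rightarrow> 'b::euclidean_space"
  assumes Fl: "lipschitz_on c UNIV F" and eps: "\<epsilon> \<ge> 0"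
  shows "W_ent \<epsilon> (distr \<mu> borel F) (distr \<nu> borel F) \<le> ereal (max (c\<^sup>2) 1) * W_ent \<epsilon> \<mu> \<nu>"
proof -
  define k where "k = max (c\<^sup>2) 1"
  have k1: "k \<ge> 1" unfolding k_def by simp
  define W' where "W' = W_ent \<epsilon> (distr \<mu> borel F) (distr \<nu> borel F)"
  have "W' * ereal (1/k) \<le> W_ent \<epsilon> \<mu> \<nu>"
    unfolding W_ent_def[of \<epsilon> \<mu> \<nu>]
  proof (rule INF_greatest)
    fix \<pi> assume cp: "\<pi> \<in> couplings \<mu> \<nu>"
    define v where "v = enn2ereal (\<integral>\<^sup>+ p. ennreal ((norm (fst p - snd p))\<^sup>2) \<partial>\<pi>) + ereal \<epsilon> * KL_div \<pi> (\<mu> \<Otimes>\<^sub>M \<nu>)"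
    have "W' \<le> ereal k * v"
      unfolding W'_def W_ent_def[of \<epsilon> "distr \<mu> borel F"] v_def k_def
      by (rule INF_lower2[OF val_push(1)[OF Fl eps cp]]) (rule val_push(2)[OF Fl eps cp])
    then have "W' * ereal (1/k) \<le> (ereal k * v) * ereal (1/k)"
      using k1 by (intro ereal_mult_right_mono) auto
    also have "\<dots> = v * ereal (k * (1/k))" by (simp add: ac_simps)
    also have "\<dots> = v" using k1 by simp
    finally show "W' * ereal (1/k) \<le> enn2ereal (\<integral>\<^sup>+ p. ennreal ((norm (fst p - snd p))\<^sup>2) \<partial>\<pi>) + ereal \<epsilon> * KL_div \<pi> (\<mu> \<Otimes>\<^sub>M \<nu>)"
      unfolding v_def .
  qed
  then have "(W' * ereal (1/k)) * ereal k \<le> W_ent \<epsilon> \<mu> \<nu> * ereal k"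
    using k1 by (intro ereal_mult_right_mono) auto
  moreover have "(W' * ereal (1/k)) * ereal k = W'"
  proof -
    have "(W' * ereal (1/k)) * ereal k = W' * ereal ((1/k) * k)" by (simp add: ac_simps)
    then show ?thesis using k1 by simp
  qed
  ultimately show ?thesis unfolding W'_def k_def by (simp add: ac_simps)
qed

lemma sinkhorn_le_W:
  assumes "\<epsilon> \<ge> 0"
  shows "sinkhorn \<epsilon> \<mu> \<nu> \<le> W_ent \<epsilon> \<mu> \<nu>"
proof -
  have a: "W_ent \<epsilon> \<nu> \<nu> \<ge> 0" "W_ent \<epsilon> \<mu> \<mu> \<ge> 0" using W_nonneg[OF assms] by auto
  then have "ereal (1/2) * (W_ent \<epsilon> \<nu> \<nu> + W_ent \<epsilon> \<mu> \<mu>) \<ge> 0" by simp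
  moreover have "x - y \<le> x" if "y \<ge> 0" for x y :: ereal
    using that by (cases x; cases y) auto
  ultimately show ?thesis unfolding sinkhorn_def by blast
qed


lemma lip_funpow:
  fixes f :: "'a::metric_space \<Rightarrow> 'a" and n :: nat
  assumes "lipschitz_on c UNIV f"
  shows "lipschitz_on (c ^ n) UNIV (f ^^ n)"
proof (induction n)
  case 0 show ?case unfolding lipschitz_on_def by simp
next
  case (Suc n)
  have "lipschitz_on (c * c ^ n) UNIV (f \<circ> (f ^^ n))"
    by (rule lipschitz_on_compose[OF Suc.IH]) (rule lipschitz_on_subset[OF assms], simp)
  then show ?case by simp
qed

lemma sum_ereal_mult:
  fixes X :: ereal
  assumes "X \<ge> 0" "\<And>m. m \<in> A \<Longrightarrow> k m \<ge> 0"
  shows "(\<Sum>m\<in>A. ereal (k m) * X) = ereal (\<Sum>m\<in>A. k m) * X"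
  using assms(2)
proof (induction A rule: infinite_finite_induct)
  case (insert x F)
  have "(\<Sum>m\<in>insert x F. ereal (k m) * X) = ereal (k x) * X + ereal (\<Sum>m\<in>F. k m) * X"
    using insert by simp
  also have "\<dots> = (ereal (k x) + ereal (\<Sum>m\<in>F. k m)) * X"
    using insert by (subst ereal_left_distrib) (auto intro: sum_nonneg)
  finally show ?case using insert by simp
qed auto

theorem theorem1:
  fixes K M L :: nat
    and P :: "nat \<Rightarrow> 'a::euclidean_space measure"
    and \<psi> :: "nat \<Rightarrow> 'a \<Rightarrow> 'z::euclidean_space"
    and \<xi> :: "nat \<Rightarrow> 'z \<Rightarrow> 'a"
    and \<sigma> :: "'z \<Rightarrow> 'z"
    and Zt :: "'z set"
    and Cpsi Cxi :: "nat \<Rightarrow> real"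
    and Csig \<epsilon> :: real
    and r :: "nat \<Rightarrow> 'a \<Rightarrow> 'a"
  assumes K2: "K \<ge> 2"
    and L1: "L \<ge> 1"
    and P_prob: "\<And>i. i \<in> {1..K} \<Longrightarrow> prob_space (P i)"
    and P_borel: "\<And>i. i \<in> {1..K} \<Longrightarrow> sets (P i) = sets borel"
    and P_mom: "\<And>i. i \<in> {1..K} \<Longrightarrow> integrable (P i) (\<lambda>x. (norm x)\<^sup>2)"
    and psi_lip: "\<And>m. m \<in> {1..M} \<Longrightarrow> lipschitz_on (Cpsi m) UNIV (\<psi> m)"
    and xi_lip: "\<And>m. m \<in> {1..M} \<Longrightarrow> lipschitz_on (Cxi m) UNIV (\<xi> m)"
    and sig_lip: "lipschitz_on Csig UNIV \<sigma>"
    and sig_range: "\<sigma> ` UNIV \<subseteq> Zt"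
    and r_def: "\<And>m x. r m x = x - \<xi> m (\<psi> m x)"
    and eps: "\<epsilon> \<ge> 0"
  shows
    "(\<Sum>m\<in>{1..M}. Max {sinkhorn \<epsilon> (distr (P i) borel (\<sigma> \<circ> gmap \<psi> r L m))
                                    (distr (P j) borel (\<sigma> \<circ> gmap \<psi> r L m))
                        | i j. i \<in> {1..K} \<and> j \<in> {1..K} \<and> i \<noteq> j})
     \<le> ereal (\<Sum>m\<in>{1..M}. max ((Csig * Cpsi m * (1 + Cpsi m * Cxi m) ^ (L - 1)
                              * (\<Prod>n\<in>{1..<m}. (1 + Cpsi n * Cxi n) ^ L))\<^sup>2) 1)
       * Max {W_ent \<epsilon> (P i) (P j) | i j. i \<in> {1..K} \<and> j \<in> {1..K} \<and> i \<noteq> j}"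
proof -
  have r_lip: "lipschitz_on (1 + Cpsi m * Cxi m) UNIV (r m)" if "m \<in> {1..M}" for m
  proof -
    have "lipschitz_on (Cxi m * Cpsi m) UNIV (\<lambda>x. \<xi> m (\<psi> m x))"
      by (rule lipschitz_on_compose2[OF psi_lip[OF that]]) (rule lipschitz_on_subset[OF xi_lip[OF that]], simp)
    then have "lipschitz_on (1 + Cxi m * Cpsi m) UNIV (\<lambda>x. x - \<xi> m (\<psi> m x))"
      by (intro lipschitz_on_diff lipschitz_on_id)
    moreover have "r m = (\<lambda>x. x - \<xi> m (\<psi> m x))" using r_def by (intro ext) simp
    ultimately show ?thesis by (simp add: mult.commute)
  qed
  have blocks_lip: "k \<le> M \<Longrightarrow> lipschitz_on (\<Prod>n\<in>{1..<Suc k}. (1 + Cpsi n * Cxi n) ^ L) UNIV (blocks r L k)" for k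
  proof (induction k)
    case 0 then show ?case by (simp add: id_def lipschitz_on_id)
  next
    case (Suc k)
    have "lipschitz_on ((1 + Cpsi (Suc k) * Cxi (Suc k)) ^ L * (\<Prod>n\<in>{1..<Suc k}. (1 + Cpsi n * Cxi n) ^ L)) UNIV
            ((r (Suc k) ^^ L) \<circ> blocks r L k)"
      by (rule lipschitz_on_compose[OF Suc.IH]) (use Suc.prems in \<open>auto intro: lipschitz_on_subset[OF lip_funpow[OF r_lip]]\<close>)
    moreover have "(\<Prod>n\<in>{1..<Suc (Suc k)}. (1 + Cpsi n * Cxi n) ^ L)
        = (1 + Cpsi (Suc k) * Cxi (Suc k)) ^ L * (\<Prod>n\<in>{1..<Suc k}. (1 + Cpsi n * Cxi n) ^ L)"
      by (simp add: prod.atLeastLessThan_Suc mult.commute)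
    ultimately show ?case by (simp only: blocks.simps(2))
  qed
  define c where "c m = Csig * Cpsi m * (1 + Cpsi m * Cxi m) ^ (L - 1)
                              * (\<Prod>n\<in>{1..<m}. (1 + Cpsi n * Cxi n) ^ L)" for m
  have F_lip: "lipschitz_on (c m) UNIV (\<sigma> \<circ> gmap \<psi> r L m)" if m: "m \<in> {1..M}" for m
  proof -
    have b: "lipschitz_on (\<Prod>n\<in>{1..<m}. (1 + Cpsi n * Cxi n) ^ L) UNIV (blocks r L (m - 1))"
    proof -
      have e: "Suc (m - 1) = m" using m by simp
      have "m - 1 \<le> M" using m by auto
      from blocks_lip[OF this] show ?thesis by (simp only: e)
    qed
    have p: "lipschitz_on (Cpsi m * (1 + Cpsi m * Cxi m) ^ (L - 1)) UNIV (\<psi> m \<circ> (r m ^^ (L - 1)))"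
      by (rule lipschitz_on_compose[OF lip_funpow[OF r_lip[OF m]]])
         (rule lipschitz_on_subset[OF psi_lip[OF m]], simp)
    have "lipschitz_on (Csig * ((Cpsi m * (1 + Cpsi m * Cxi m) ^ (L - 1)) * (\<Prod>n\<in>{1..<m}. (1 + Cpsi n * Cxi n) ^ L))) UNIV
       (\<sigma> \<circ> ((\<psi> m \<circ> (r m ^^ (L - 1))) \<circ> blocks r L (m - 1)))"
      by (rule lipschitz_on_compose[OF lipschitz_on_compose[OF b lipschitz_on_subset[OF p subset_UNIV]]])
         (rule lipschitz_on_subset[OF sig_lip], simp)
    then show ?thesis unfolding c_def gmap_def by (simp add: ac_simps)
  qed
  define W where "W = Max {W_ent \<epsilon> (P i) (P j) | i j. i \<in> {1..K} \<and> j \<in> {1..K} \<and> i \<noteq> j}"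
  have fin: "finite {f i j | i j. i \<in> {1..K} \<and> j \<in> {1..K} \<and> i \<noteq> j}" for f :: "nat \<Rightarrow> nat \<Rightarrow> ereal"
  proof (rule finite_subset)
    show "{f i j | i j. i \<in> {1..K} \<and> j \<in> {1..K} \<and> i \<noteq> j} \<subseteq> (\<lambda>(i,j). f i j) ` ({1..K} \<times> {1..K})"
      by auto
  qed auto
  have ne: "{f i j | i j. i \<in> {1..K} \<and> j \<in> {1..K} \<and> i \<noteq> j} \<noteq> {}" for f :: "nat \<Rightarrow> nat \<Rightarrow> ereal"
  proof -
    have "f 1 2 \<in> {f i j | i j. i \<in> {1..K} \<and> j \<in> {1..K} \<and> i \<noteq> j}" using K2 by force
    then show ?thesis by blast
  qed
  have Wge: "W_ent \<epsilon> (P i) (P j) \<le> W" if "i \<in> {1..K}" "j \<in> {1..K}" "i \<noteq> j" for i j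
    unfolding W_def by (rule Max_ge[OF fin]) (use that in blast)
  have W0: "W \<ge> 0" using Wge[of 1 2] W_nonneg[OF eps] K2 order_trans by fastforce
  have Mm: "Max {sinkhorn \<epsilon> (distr (P i) borel (\<sigma> \<circ> gmap \<psi> r L m)) (distr (P j) borel (\<sigma> \<circ> gmap \<psi> r L m))
                        | i j. i \<in> {1..K} \<and> j \<in> {1..K} \<and> i \<noteq> j} \<le> ereal (max ((c m)\<^sup>2) 1) * W"
    if m: "m \<in> {1..M}" for m
  proof (subst Max_le_iff[OF fin ne], safe)
    fix i j :: nat assume ij: "i \<in> {1..K}" "j \<in> {1..K}" "i \<noteq> j"
    have "sinkhorn \<epsilon> (distr (P i) borel (\<sigma> \<circ> gmap \<psi> r L m)) (distr (P j) borel (\<sigma> \<circ> gmap \<psi> r L m))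
       \<le> W_ent \<epsilon> (distr (P i) borel (\<sigma> \<circ> gmap \<psi> r L m)) (distr (P j) borel (\<sigma> \<circ> gmap \<psi> r L m))"
      by (rule sinkhorn_le_W[OF eps])
    also have "\<dots> \<le> ereal (max ((c m)\<^sup>2) 1) * W_ent \<epsilon> (P i) (P j)"
      by (rule W_push[OF F_lip[OF m] eps])
    also have "\<dots> \<le> ereal (max ((c m)\<^sup>2) 1) * W"
      by (intro ereal_mult_left_mono Wge ij) (simp add: max_def)
    finally show "sinkhorn \<epsilon> (distr (P i) borel (\<sigma> \<circ> gmap \<psi> r L m)) (distr (P j) borel (\<sigma> \<circ> gmap \<psi> r L m))
       \<le> ereal (max ((c m)\<^sup>2) 1) * W" .
  qed
  have "(\<Sum>m\<in>{1..M}. Max {sinkhorn \<epsilon> (distr (P i) borel (\<sigma> \<circ> gmap \<psi> r L m))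
                                    (distr (P j) borel (\<sigma> \<circ> gmap \<psi> r L m))
                        | i j. i \<in> {1..K} \<and> j \<in> {1..K} \<and> i \<noteq> j})
     \<le> (\<Sum>m\<in>{1..M}. ereal (max ((c m)\<^sup>2) 1) * W)"
    by (rule sum_mono) (rule Mm)
  also have "\<dots> = ereal (\<Sum>m\<in>{1..M}. max ((c m)\<^sup>2) 1) * W"
    by (rule sum_ereal_mult[OF W0]) simp
  finally show ?thesis unfolding c_def W_def .
qed

end
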